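(* Consider $\Gamma_T(p,q)$ and its dual games. Let $x^*$ be the realization plan of a security strategy of player 1 in $\Gamma_T(p,q)$ and $\nu^{*l}=-u_{l,0}(x^* )$ for $l\in L$. Then player 1's security strategy $\tilde\sigma^*$ in the type-2 dual game $\tilde\Gamma^2_T(p,\nu^* )$, which at stage $t$ depends only on $(t,p_t,\nu_t)$, is also a security strategy of player 1 in $\Gamma_T(p,q)$. Similarly, let $y^*$ be the realization plan of a security strategy of player 2 in $\Gamma_T(p,q)$ and $\mu^{*k}=-w_{k,0}(y^* )$ for $k\in K$; then player 2's security strategy $\tilde\tau^*$ in $\tilde\Gamma^1_T(\mu^*,q)$, which at stage $t$ depends only on $(t,\mu_t,q_t)$, is also a security strategy of player 2 in $\Gamma_T(p,q)$.
   Context: Setting: nonempty finite type sets $K,L$, action sets $A,B$, payoff $M:K\times L\times A\times B\to\mathbb R$ ($M^{kl}_{a,b}=M(k,l,a,b)$), $p\in\Delta(K),q\in\Delta(L)$ with positive entries. In $\Gamma_T(p,q)$, $k\sim p$, $l\sim q$ drawn independently, told privately to players 1, 2; $T$ stages of simultaneous, publicly announced actions; behavior strategies depend on own type and both histories; payoff $\mathbb E[\sum_{t=1}^TM(k,l,a_t,b_t)]$ to player 1 (maximizer); security strategies attain $\max_\sigma\min_\tau$ resp. $\min_\tau\max_\sigma$ of the payoff. Realization plan of $\sigma$: $x^{a_t}_{k,h_t^A,h_t^B}=p^k\prod_{s=1}^t\sigma_s^{a_s}(k,h_s^A,h_s^B)$; $u_{l,0}(x)=\min_{\tau(l)}\sum_kp^k\mathbb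 E_{\sigma,\tau(l)}[\sum_{s=1}^TM\mid k,l]$; for a realization plan $y$ of $\tau$, $w_{k,0}(y)=\max_{\sigma(k)}\sum_lq^l\mathbb E_{\sigma(k),\tau}[\sum_{s=1}^TM\mid k,l]$. Dual games: $\tilde\Gamma^1_T(\mu,q)$: player 1 chooses $k$ himself, $l\sim q$ by nature, payoff $\mathbb E[\mu^k+\sum_{t=1}^TM]$; $\tilde\Gamma^2_T(p,\nu)$: $k\sim p$ by nature, player 2 chooses $l$ himself, payoff $\mathbb E[\nu^l+\sum_{t=1}^TM]$. Statistics: in $\tilde\Gamma^2_T(p,\nu)$, with $r_t^k=\sigma_t(k,h_t^A,h_t^B)$, $p_1=p$, $\nu_1=\nu$, $p^k_{t+1}=p_t^kr_t^k(a_t)/\sum_{k'}p_t^{k'}r_t^{k'}(a_t)$, $\nu^l_{t+1}=\nu^l_t+\sum_kp^k_{t+1}M^{kl}_{a_t,b_t}$; in $\tilde\Gamma^1_T(\mu,q)$, with $z_t^l=\tau_t(l,h_t^A,h_t^B)$, $q_1=q$, $\mu_1=\mu$, $q^l_{t+1}=q^l_tz^l_t(b_t)/\sum_{l'}q_t^{l'}z_t^{l'}(b_t)$, $\mu^k_{t+1}=\mu^k_t+\sum_lq^l_{t+1}M^{kl}_{a_t,b_t}$. *)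

theory Defs
  imports Main "HOL.Real"
begin

text \<open>
  Type sets K, L and action sets A, B are finite types 'k, 'l, 'a, 'b.
  Histories: h^A :: 'a list, h^B :: 'b list (actions of previous stages);
  at stage t (counted from 0 here) both have length t.
\<close>

definition is_dist :: "('x::finite \<Rightarrow> real) \<Rightarrow> bool" where
  "is_dist f \<longleftrightarrow> (\<forall>x. 0 \<le> f x) \<and> sum f UNIV = 1"

definition valid1 :: "('k \<Rightarrow> 'a list \<Rightarrow> 'b list \<Rightarrow> 'a::finite \<Rightarrow> real) \<Rightarrow> bool" where
  "valid1 \<sigma> \<longleftrightarrow> (\<forall>k hA hB. is_dist (\<sigma> k hA hB))"

definition valid2 :: "('l \<Rightarrow> 'a list \<Rightarrow> 'b list \<Rightarrow> 'b::finite \<Rightarrow> real) \<Rightarrow> bool" where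
  "valid2 \<tau> \<longleftrightarrow> (\<forall>l hA hB. is_dist (\<tau> l hA hB))"

text \<open>Conditional expected payoff of the remaining n stages given types k, l
  and current histories hA, hB.\<close>
fun cpay :: "('k \<Rightarrow> 'l \<Rightarrow> 'a::finite \<Rightarrow> 'b::finite \<Rightarrow> real) \<Rightarrow>
    ('k \<Rightarrow> 'a list \<Rightarrow> 'b list \<Rightarrow> 'a \<Rightarrow> real) \<Rightarrow>
    ('l \<Rightarrow> 'a list \<Rightarrow> 'b list \<Rightarrow> 'b \<Rightarrow> real) \<Rightarrow>
    'k \<Rightarrow> 'l \<Rightarrow> nat \<Rightarrow> 'a list \<Rightarrow> 'b list \<Rightarrow> real" where
  "cpay M \<sigma> \<tau> k l 0 hA hB = 0"
| "cpay M \<sigma> \<tau> k l (Suc n) hA hB =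
     (\<Sum>a\<in>UNIV. \<Sum>b\<in>UNIV. \<sigma> k hA hB a * \<tau> l hA hB b *
        (M k l a b + cpay M \<sigma> \<tau> k l n (hA @ [a]) (hB @ [b])))"

definition payoff :: "('k::finite \<Rightarrow> 'l::finite \<Rightarrow> 'a::finite \<Rightarrow> 'b::finite \<Rightarrow> real) \<Rightarrow> nat \<Rightarrow>
    ('k \<Rightarrow> real) \<Rightarrow> ('l \<Rightarrow> real) \<Rightarrow>
    ('k \<Rightarrow> 'a list \<Rightarrow> 'b list \<Rightarrow> 'a \<Rightarrow> real) \<Rightarrow>
    ('l \<Rightarrow> 'a list \<Rightarrow> 'b list \<Rightarrow> 'b \<Rightarrow> real) \<Rightarrow> real" where
  "payoff M T p q \<sigma> \<tau> = (\<Sum>k\<in>UNIV. \<Sum>l\<in>UNIV. p k * q l * cpay M \<sigma> \<tau> k l T [] [])"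

definition security1 where
  "security1 M T p q \<sigma> \<longleftrightarrow> valid1 \<sigma> \<and>
     (INF \<tau>\<in>{\<tau>. valid2 \<tau>}. payoff M T p q \<sigma> \<tau>) =
     (SUP \<sigma>'\<in>{\<sigma>'. valid1 \<sigma>'}. INF \<tau>\<in>{\<tau>. valid2 \<tau>}. payoff M T p q \<sigma>' \<tau>)"

definition security2 where
  "security2 M T p q \<tau> \<longleftrightarrow> valid2 \<tau> \<and>
     (SUP \<sigma>\<in>{\<sigma>. valid1 \<sigma>}. payoff M T p q \<sigma> \<tau>) =
     (INF \<tau>'\<in>{\<tau>'. valid2 \<tau>'}. SUP \<sigma>\<in>{\<sigma>. valid1 \<sigma>}. payoff M T p q \<sigma> \<tau>')"

text \<open>u_{l,0}(x) for the realization plan x of sigma (it depends on sigma only via x):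
  min over strategies tau(l) of type l of sum_k p^k E[sum M | k,l].\<close>
definition u0 where
  "u0 M T p \<sigma> l = (INF \<tau>l\<in>{\<tau>l. \<forall>hA hB. is_dist (\<tau>l hA hB)}.
      \<Sum>k\<in>UNIV. p k * cpay M \<sigma> (\<lambda>_. \<tau>l) k l T [] [])"

definition w0 where
  "w0 M T q \<tau> k = (SUP \<sigma>k\<in>{\<sigma>k. \<forall>hA hB. is_dist (\<sigma>k hA hB)}.
      \<Sum>l\<in>UNIV. q l * cpay M (\<lambda>_. \<sigma>k) \<tau> k l T [] [])"

text \<open>Dual game of type 2, tilde Gamma^2_T(p,nu): k ~ p by nature, player 2 chooses l
  himself (possibly at random, with distribution pi) and a strategy tau.\<close>
definition dpay2 where
  "dpay2 M T p \<nu> \<sigma> \<pi> \<tau> = (\<Sum>k\<in>UNIV. \<Sum>l\<in>UNIV. p k * \<pi> l * (\<nu> l + cpay M \<sigma> \<tau> k l T [] []))"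

definition dual_security1 where
  "dual_security1 M T p \<nu> \<sigma> \<longleftrightarrow> valid1 \<sigma> \<and>
     (INF z\<in>{\<pi>. is_dist \<pi>} \<times> {\<tau>. valid2 \<tau>}. dpay2 M T p \<nu> \<sigma> (fst z) (snd z)) =
     (SUP \<sigma>'\<in>{\<sigma>'. valid1 \<sigma>'}. INF z\<in>{\<pi>. is_dist \<pi>} \<times> {\<tau>. valid2 \<tau>}.
          dpay2 M T p \<nu> \<sigma>' (fst z) (snd z))"

text \<open>Dual game of type 1, tilde Gamma^1_T(mu,q): player 1 chooses k himself (with
  distribution rho) and a strategy sigma, l ~ q by nature.\<close>
definition dpay1 where
  "dpay1 M T \<mu> q \<rho> \<sigma> \<tau> = (\<Sum>k\<in>UNIV. \<Sum>l\<in>UNIV. \<rho> k * q l * (\<mu> k + cpay M \<sigma> \<tau> k l T [] []))"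

definition dual_security2 where
  "dual_security2 M T \<mu> q \<tau> \<longleftrightarrow> valid2 \<tau> \<and>
     (SUP z\<in>{\<rho>. is_dist \<rho>} \<times> {\<sigma>. valid1 \<sigma>}. dpay1 M T \<mu> q (fst z) (snd z) \<tau>) =
     (INF \<tau>'\<in>{\<tau>'. valid2 \<tau>'}. SUP z\<in>{\<rho>. is_dist \<rho>} \<times> {\<sigma>. valid1 \<sigma>}.
          dpay1 M T \<mu> q (fst z) (snd z) \<tau>')"

text \<open>Statistics (p_t, nu_t) in tilde Gamma^2 along histories hA, hB (stage t = 0 here
  corresponds to t = 1 in the paper). Division by 0 yields 0 (Isabelle convention).\<close>
fun stat2 :: "('k::finite \<Rightarrow> 'l::finite \<Rightarrow> 'a::finite \<Rightarrow> 'b::finite \<Rightarrow> real) \<Rightarrow>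
    ('k \<Rightarrow> 'a list \<Rightarrow> 'b list \<Rightarrow> 'a \<Rightarrow> real) \<Rightarrow> ('k \<Rightarrow> real) \<Rightarrow> ('l \<Rightarrow> real) \<Rightarrow>
    nat \<Rightarrow> 'a list \<Rightarrow> 'b list \<Rightarrow> ('k \<Rightarrow> real) \<times> ('l \<Rightarrow> real)" where
  "stat2 M \<sigma> p \<nu> 0 hA hB = (p, \<nu>)"
| "stat2 M \<sigma> p \<nu> (Suc t) hA hB =
     (let pt = fst (stat2 M \<sigma> p \<nu> t hA hB);
          \<nu>t = snd (stat2 M \<sigma> p \<nu> t hA hB);
          a = hA ! t; b = hB ! t;
          r = (\<lambda>k. \<sigma> k (take t hA) (take t hB) a);
          den = (\<Sum>k'\<in>UNIV. pt k' * r k');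
          p' = (\<lambda>k. pt k * r k / den)
      in (p', \<lambda>l. \<nu>t l + (\<Sum>k\<in>UNIV. p' k * M k l a b)))"

fun stat1 :: "('k::finite \<Rightarrow> 'l::finite \<Rightarrow> 'a::finite \<Rightarrow> 'b::finite \<Rightarrow> real) \<Rightarrow>
    ('l \<Rightarrow> 'a list \<Rightarrow> 'b list \<Rightarrow> 'b \<Rightarrow> real) \<Rightarrow> ('k \<Rightarrow> real) \<Rightarrow> ('l \<Rightarrow> real) \<Rightarrow>
    nat \<Rightarrow> 'a list \<Rightarrow> 'b list \<Rightarrow> ('k \<Rightarrow> real) \<times> ('l \<Rightarrow> real)" where
  "stat1 M \<tau> \<mu> q 0 hA hB = (\<mu>, q)"
| "stat1 M \<tau> \<mu> q (Suc t) hA hB =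
     (let \<mu>t = fst (stat1 M \<tau> \<mu> q t hA hB);
          qt = snd (stat1 M \<tau> \<mu> q t hA hB);
          a = hA ! t; b = hB ! t;
          z = (\<lambda>l. \<tau> l (take t hA) (take t hB) b);
          den = (\<Sum>l'\<in>UNIV. qt l' * z l');
          q' = (\<lambda>l. qt l * z l / den)
      in (\<lambda>k. \<mu>t k + (\<Sum>l\<in>UNIV. q' l * M k l a b), q'))"

definition markov1 where
  "markov1 M T p \<nu> \<sigma> \<longleftrightarrow> (\<exists>f. \<forall>hA hB k. length hA = length hB \<and> length hA < T \<longrightarrow>
      \<sigma> k hA hB = f (length hA) (fst (stat2 M \<sigma> p \<nu> (length hA) hA hB))
                                 (snd (stat2 M \<sigma> p \<nu> (length hA) hA hB)) k)"

definition markov2 where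
  "markov2 M T \<mu> q \<tau> \<longleftrightarrow> (\<exists>g. \<forall>hA hB l. length hA = length hB \<and> length hA < T \<longrightarrow>
      \<tau> l hA hB = g (length hA) (fst (stat1 M \<tau> \<mu> q (length hA) hA hB))
                                 (snd (stat1 M \<tau> \<mu> q (length hA) hA hB)) l)"

end

theory Submission
  imports Defs
begin

definition Bd :: "('k::finite \<Rightarrow> 'l::finite \<Rightarrow> 'a::finite \<Rightarrow> 'b::finite \<Rightarrow> real) \<Rightarrow> real" where
  "Bd M = Max (range (\<lambda>(k,l,a,b). \<bar>M k l a b\<bar>))"

lemma Bd_ge: "\<bar>M k l a b\<bar> \<le> Bd M"
  unfolding Bd_def by (rule Max_ge) (auto intro!: image_eqI[where x="(k,l,a,b)"])

lemma dist_sum1: "is_dist f \<Longrightarrow> sum f UNIV = 1" by (simp add: is_dist_def)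
lemma dist_nonneg: "is_dist f \<Longrightarrow> 0 \<le> f x" by (simp add: is_dist_def)

lemma dist_avg_abs:
  assumes "is_dist p" "\<And>x. \<bar>c x\<bar> \<le> D"
  shows "\<bar>\<Sum>x\<in>UNIV. p x * c x\<bar> \<le> D"
proof -
  have "\<bar>\<Sum>x\<in>UNIV. p x * c x\<bar> \<le> (\<Sum>x\<in>UNIV. \<bar>p x * c x\<bar>)" by (rule sum_abs)
  also have "\<dots> \<le> (\<Sum>x\<in>UNIV. p x * D)"
  proof (rule sum_mono)
    fix x
    have "0 \<le> p x" using assms(1) by (rule dist_nonneg)
    then show "\<bar>p x * c x\<bar> \<le> p x * D" using assms(2)[of x] by (simp add: abs_mult mult_left_mono)
  qed
  also have "\<dots> = D" using dist_sum1[OF assms(1)] by (simp add: sum_distrib_right[symmetric])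
  finally show ?thesis .
qed

lemma dist_ex: "\<exists>f::'x::finite\<Rightarrow>real. is_dist f"
  by (rule exI[where x="\<lambda>_. 1 / real (card (UNIV::'x set))"]) (simp add: is_dist_def)

lemma delta_dist: "is_dist (\<lambda>x. if x = y then 1 else (0::real))"
  by (simp add: is_dist_def)

lemma cpay_bound:
  assumes "valid1 \<sigma>" "valid2 \<tau>"
  shows "\<bar>cpay M \<sigma> \<tau> k l n hA hB\<bar> \<le> real n * Bd M"
proof (induction n arbitrary: hA hB)
  case 0 then show ?case by simp
next
  case (Suc n)
  have e: "cpay M \<sigma> \<tau> k l (Suc n) hA hB = (\<Sum>a\<in>UNIV. \<sigma> k hA hB a *
      (\<Sum>b\<in>UNIV. \<tau> l hA hB b * (M k l a b + cpay M \<sigma> \<tau> k l n (hA @ [a]) (hB @ [b]))))"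
    by (simp add: sum_distrib_left mult.assoc)
  show ?case unfolding e
  proof (rule dist_avg_abs)
    show "is_dist (\<sigma> k hA hB)" using assms by (simp add: valid1_def)
    fix a show "\<bar>\<Sum>b\<in>UNIV. \<tau> l hA hB b * (M k l a b + cpay M \<sigma> \<tau> k l n (hA @ [a]) (hB @ [b]))\<bar> \<le> real (Suc n) * Bd M"
    proof (rule dist_avg_abs)
      show "is_dist (\<tau> l hA hB)" using assms by (simp add: valid2_def)
      fix b
      have "\<bar>M k l a b + cpay M \<sigma> \<tau> k l n (hA @ [a]) (hB @ [b])\<bar> \<le> Bd M + real n * Bd M"
        using Bd_ge[of M k l a b] Suc.IH[of "hA @ [a]" "hB @ [b]"] by linarith
      then show "\<bar>M k l a b + cpay M \<sigma> \<tau> k l n (hA @ [a]) (hB @ [b])\<bar> \<le> real (Suc n) * Bd M"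
        by (simp add: algebra_simps)
    qed
  qed
qed

lemma cpay_loc2: "cpay M \<sigma> \<tau> k l n hA hB = cpay M \<sigma> (\<lambda>_. \<tau> l) k l n hA hB"
  by (induction n arbitrary: hA hB) auto
lemma cpay_loc1: "cpay M \<sigma> \<tau> k l n hA hB = cpay M (\<lambda>_. \<sigma> k) \<tau> k l n hA hB"
  by (induction n arbitrary: hA hB) auto

lemma valid2_const: "\<forall>hA hB. is_dist (\<tau>l hA hB) \<Longrightarrow> valid2 (\<lambda>_. \<tau>l)"
  by (simp add: valid2_def)
lemma valid1_const: "\<forall>hA hB. is_dist (\<sigma>k hA hB) \<Longrightarrow> valid1 (\<lambda>_. \<sigma>k)"
  by (simp add: valid1_def)

lemma TL_ne: "{\<tau>l::'a list \<Rightarrow> 'b list \<Rightarrow> 'c::finite \<Rightarrow> real. \<forall>hA hB. is_dist (\<tau>l hA hB)} \<noteq> {}"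
proof -
  obtain f :: "'c \<Rightarrow> real" where "is_dist f" using dist_ex by blast
  then have "(\<lambda>_ _. f) \<in> {\<tau>l::'a list \<Rightarrow> 'b list \<Rightarrow> 'c::finite \<Rightarrow> real. \<forall>hA hB. is_dist (\<tau>l hA hB)}" by simp
  then show ?thesis by (metis empty_iff)
qed

lemma V1_ne: "{\<sigma>::'k \<Rightarrow> 'a list \<Rightarrow> 'b list \<Rightarrow> 'a::finite \<Rightarrow> real. valid1 \<sigma>} \<noteq> {}"
proof -
  obtain f :: "'a \<Rightarrow> real" where "is_dist f" using dist_ex by blast
  then have "valid1 (\<lambda>_ _ _. f :: 'a \<Rightarrow> real)" by (simp add: valid1_def)
  then show ?thesis by blast
qed

lemma V2_ne: "{\<tau>::'l \<Rightarrow> 'a list \<Rightarrow> 'b list \<Rightarrow> 'b::finite \<Rightarrow> real. valid2 \<tau>} \<noteq> {}"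
proof -
  obtain f :: "'b \<Rightarrow> real" where "is_dist f" using dist_ex by blast
  then have "valid2 (\<lambda>_ _ _. f :: 'b \<Rightarrow> real)" by (simp add: valid2_def)
  then show ?thesis by blast
qed

lemma D_ne: "{\<pi>::'x::finite \<Rightarrow> real. is_dist \<pi>} \<noteq> {}"
  using dist_ex by blast

lemma S1_bound:
  fixes M :: "'k::finite \<Rightarrow> 'l::finite \<Rightarrow> 'a::finite \<Rightarrow> 'b::finite \<Rightarrow> real"
  assumes "is_dist p" "valid1 \<sigma>" "\<forall>hA hB. is_dist (\<tau>l hA hB)"
  shows "\<bar>\<Sum>k\<in>UNIV. p k * cpay M \<sigma> (\<lambda>_. \<tau>l) k l T [] []\<bar> \<le> real T * Bd M"
  by (rule dist_avg_abs[OF assms(1)]) (rule cpay_bound[OF assms(2) valid2_const[OF assms(3)]])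

lemma S1_bb:
  fixes M :: "'k::finite \<Rightarrow> 'l::finite \<Rightarrow> 'a::finite \<Rightarrow> 'b::finite \<Rightarrow> real"
  assumes "is_dist p" "valid1 \<sigma>"
  shows "bdd_below ((\<lambda>\<tau>l. \<Sum>k\<in>UNIV. p k * cpay M \<sigma> (\<lambda>_. \<tau>l) k l T [] []) ` {\<tau>l. \<forall>hA hB. is_dist (\<tau>l hA hB)})"
proof (rule bdd_belowI[where m="- (real T * Bd M)"])
  fix x assume "x \<in> (\<lambda>\<tau>l. \<Sum>k\<in>UNIV. p k * cpay M \<sigma> (\<lambda>_. \<tau>l) k l T [] []) ` {\<tau>l. \<forall>hA hB. is_dist (\<tau>l hA hB)}"
  then obtain \<tau>l where t: "\<forall>hA hB. is_dist (\<tau>l hA hB)" and x: "x = (\<Sum>k\<in>UNIV. p k * cpay M \<sigma> (\<lambda>_. \<tau>l) k l T [] [])" by blast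
  show "- (real T * Bd M) \<le> x" using S1_bound[OF assms t, of M l T] x by linarith
qed

lemma u0_lower:
  fixes M :: "'k::finite \<Rightarrow> 'l::finite \<Rightarrow> 'a::finite \<Rightarrow> 'b::finite \<Rightarrow> real"
  assumes "is_dist p" "valid1 \<sigma>" "\<forall>hA hB. is_dist (\<tau>l hA hB)"
  shows "u0 M T p \<sigma> l \<le> (\<Sum>k\<in>UNIV. p k * cpay M \<sigma> (\<lambda>_. \<tau>l) k l T [] [])"
  unfolding u0_def
proof (rule cINF_lower)
  show "bdd_below ((\<lambda>\<tau>l. \<Sum>k\<in>UNIV. p k * cpay M \<sigma> (\<lambda>_. \<tau>l) k l T [] []) ` {\<tau>l. \<forall>hA hB. is_dist (\<tau>l hA hB)})"
    by (rule S1_bb[OF assms(1,2)])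
qed (use assms in auto)

lemma u0_greatest:
  assumes "\<And>\<tau>l. \<forall>hA hB. is_dist (\<tau>l hA hB) \<Longrightarrow> c \<le> (\<Sum>k\<in>UNIV. p k * cpay M \<sigma> (\<lambda>_. \<tau>l) k l T [] [])"
  shows "c \<le> u0 M T p \<sigma> l"
  unfolding u0_def by (rule cINF_greatest) (use assms TL_ne in auto)

lemma u0_less:
  fixes M :: "'k::finite \<Rightarrow> 'l::finite \<Rightarrow> 'a::finite \<Rightarrow> 'b::finite \<Rightarrow> real"
  assumes "is_dist p" "valid1 \<sigma>" "0 < e"
  shows "\<exists>\<tau>l. (\<forall>hA hB. is_dist (\<tau>l hA hB)) \<and> (\<Sum>k\<in>UNIV. p k * cpay M \<sigma> (\<lambda>_. \<tau>l) k l T [] []) < u0 M T p \<sigma> l + e"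
proof -
  have bb: "bdd_below ((\<lambda>\<tau>l. \<Sum>k\<in>UNIV. p k * cpay M \<sigma> (\<lambda>_. \<tau>l) k l T [] []) ` {\<tau>l. \<forall>hA hB. is_dist (\<tau>l hA hB)})"
    by (rule S1_bb[OF assms(1,2)])
  have "u0 M T p \<sigma> l < u0 M T p \<sigma> l + e" using assms by simp
  then have "\<exists>\<tau>l\<in>{\<tau>l. \<forall>hA hB. is_dist (\<tau>l hA hB)}. (\<Sum>k\<in>UNIV. p k * cpay M \<sigma> (\<lambda>_. \<tau>l) k l T [] []) < u0 M T p \<sigma> l + e"
    unfolding u0_def[of M T p \<sigma> l] by (subst (asm) cINF_less_iff[OF TL_ne bb])
  then show ?thesis by blast
qed

lemma payoff_decomp:
  "payoff M T p q \<sigma> \<tau> = (\<Sum>l\<in>UNIV. q l * (\<Sum>k\<in>UNIV. p k * cpay M \<sigma> (\<lambda>_. \<tau> l) k l T [] []))"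
  unfolding payoff_def
  by (subst sum.swap) (simp add: sum_distrib_left cpay_loc2[of M \<sigma> \<tau>] mult.assoc mult.left_commute)

lemma sum_le_e:
  assumes "is_dist q" "\<And>l. f l \<le> g l + e"
  shows "(\<Sum>l\<in>UNIV. q l * f l) \<le> (\<Sum>l\<in>UNIV. q l * g l) + e"
proof -
  have "(\<Sum>l\<in>UNIV. q l * f l) \<le> (\<Sum>l\<in>UNIV. q l * (g l + e))"
    by (rule sum_mono) (use assms dist_nonneg in \<open>auto intro: mult_left_mono\<close>)
  also have "\<dots> = (\<Sum>l\<in>UNIV. q l * g l) + e"
    using dist_sum1[OF assms(1)] by (simp add: distrib_left sum.distrib sum_distrib_right[symmetric])
  finally show ?thesis .
qed

lemma sum_le_w:
  assumes "is_dist q" "\<And>l. f l \<le> g l"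
  shows "(\<Sum>l\<in>UNIV. q l * f l) \<le> (\<Sum>l\<in>UNIV. q l * g l)"
  using sum_le_e[OF assms(1), of f g 0] assms(2) by simp

lemma payoff_bound:
  fixes M :: "'k::finite \<Rightarrow> 'l::finite \<Rightarrow> 'a::finite \<Rightarrow> 'b::finite \<Rightarrow> real"
  assumes "is_dist p" "is_dist q" "valid1 \<sigma>" "valid2 \<tau>"
  shows "\<bar>payoff M T p q \<sigma> \<tau>\<bar> \<le> real T * Bd M"
proof -
  have e: "payoff M T p q \<sigma> \<tau> = (\<Sum>k\<in>UNIV. p k * (\<Sum>l\<in>UNIV. q l * cpay M \<sigma> \<tau> k l T [] []))"
    unfolding payoff_def by (simp add: sum_distrib_left mult.assoc)
  show ?thesis unfolding e
    by (rule dist_avg_abs[OF assms(1)], rule dist_avg_abs[OF assms(2)], rule cpay_bound[OF assms(3,4)])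
qed

lemma F_eq:
  fixes M :: "'k::finite \<Rightarrow> 'l::finite \<Rightarrow> 'a::finite \<Rightarrow> 'b::finite \<Rightarrow> real"
  assumes p: "is_dist p" and q: "is_dist q" and s: "valid1 \<sigma>"
  shows "(INF \<tau>\<in>{\<tau>. valid2 \<tau>}. payoff M T p q \<sigma> \<tau>) = (\<Sum>l\<in>UNIV. q l * u0 M T p \<sigma> l)"
proof (rule antisym)
  show "(\<Sum>l\<in>UNIV. q l * u0 M T p \<sigma> l) \<le> (INF \<tau>\<in>{\<tau>. valid2 \<tau>}. payoff M T p q \<sigma> \<tau>)"
  proof (rule cINF_greatest)
    show "{\<tau>. valid2 \<tau>} \<noteq> {}" by (rule V2_ne)
    fix \<tau> :: "'l \<Rightarrow> 'a list \<Rightarrow> 'b list \<Rightarrow> 'b \<Rightarrow> real" assume "\<tau> \<in> {\<tau>. valid2 \<tau>}"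
    then have v: "valid2 \<tau>" by simp
    show "(\<Sum>l\<in>UNIV. q l * u0 M T p \<sigma> l) \<le> payoff M T p q \<sigma> \<tau>"
      unfolding payoff_decomp
      by (rule sum_le_w[OF q], rule u0_lower[OF p s]) (use v in \<open>simp add: valid2_def\<close>)
  qed
next
  have bb: "bdd_below ((\<lambda>\<tau>. payoff M T p q \<sigma> \<tau>) ` {\<tau>. valid2 \<tau>})"
  proof (rule bdd_belowI[where m="- (real T * Bd M)"])
    fix x assume "x \<in> (\<lambda>\<tau>. payoff M T p q \<sigma> \<tau>) ` {\<tau>. valid2 \<tau>}"
    then obtain \<tau> where v: "valid2 \<tau>" and x: "x = payoff M T p q \<sigma> \<tau>" by blast
    show "- (real T * Bd M) \<le> x" using payoff_bound[OF p q s v, of M T] x by linarith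
  qed
  show "(INF \<tau>\<in>{\<tau>. valid2 \<tau>}. payoff M T p q \<sigma> \<tau>) \<le> (\<Sum>l\<in>UNIV. q l * u0 M T p \<sigma> l)"
  proof (rule field_le_epsilon)
    fix e :: real assume e: "0 < e"
    have "\<forall>l. \<exists>\<tau>l. (\<forall>hA hB. is_dist (\<tau>l hA hB)) \<and> (\<Sum>k\<in>UNIV. p k * cpay M \<sigma> (\<lambda>_. \<tau>l) k l T [] []) < u0 M T p \<sigma> l + e"
      using u0_less[OF p s e] by blast
    then have "\<exists>tc. \<forall>l. (\<forall>hA hB. is_dist (tc l hA hB)) \<and> (\<Sum>k\<in>UNIV. p k * cpay M \<sigma> (\<lambda>_. tc l) k l T [] []) < u0 M T p \<sigma> l + e"
      by (rule choice)
    then obtain tc where tc: "\<And>l. (\<forall>hA hB. is_dist (tc l hA hB)) \<and> (\<Sum>k\<in>UNIV. p k * cpay M \<sigma> (\<lambda>_. tc l) k l T [] []) < u0 M T p \<sigma> l + e"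
      by blast
    have v: "valid2 tc" using tc by (simp add: valid2_def)
    have "(INF \<tau>\<in>{\<tau>. valid2 \<tau>}. payoff M T p q \<sigma> \<tau>) \<le> payoff M T p q \<sigma> tc"
      by (rule cINF_lower[OF bb]) (use v in simp)
    also have "\<dots> \<le> (\<Sum>l\<in>UNIV. q l * u0 M T p \<sigma> l) + e"
      unfolding payoff_decomp by (rule sum_le_e[OF q]) (use tc in \<open>auto intro: less_imp_le\<close>)
    finally show "(INF \<tau>\<in>{\<tau>. valid2 \<tau>}. payoff M T p q \<sigma> \<tau>) \<le> (\<Sum>l\<in>UNIV. q l * u0 M T p \<sigma> l) + e" .
  qed
qed

lemma dpay2_decomp:
  assumes "is_dist p"
  shows "dpay2 M T p \<nu> \<sigma> \<pi> \<tau> = (\<Sum>l\<in>UNIV. \<pi> l * (\<nu> l + (\<Sum>k\<in>UNIV. p k * cpay M \<sigma> (\<lambda>_. \<tau> l) k l T [] [])))"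
proof -
  have "dpay2 M T p \<nu> \<sigma> \<pi> \<tau> = (\<Sum>l\<in>UNIV. \<Sum>k\<in>UNIV. p k * \<pi> l * (\<nu> l + cpay M \<sigma> \<tau> k l T [] []))"
    unfolding dpay2_def by (rule sum.swap)
  also have "\<dots> = (\<Sum>l\<in>UNIV. \<pi> l * (\<nu> l * (\<Sum>k\<in>UNIV. p k) + (\<Sum>k\<in>UNIV. p k * cpay M \<sigma> (\<lambda>_. \<tau> l) k l T [] [])))"
    by (simp add: sum_distrib_left sum_distrib_right sum.distrib algebra_simps cpay_loc2[of M \<sigma> \<tau>])
  finally show ?thesis using dist_sum1[OF assms] by simp
qed

lemma u0_abs:
  fixes M :: "'k::finite \<Rightarrow> 'l::finite \<Rightarrow> 'a::finite \<Rightarrow> 'b::finite \<Rightarrow> real"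
  assumes p: "is_dist p" and s: "valid1 \<sigma>"
  shows "\<bar>u0 M T p \<sigma> l\<bar> \<le> real T * Bd M"
proof -
  have lo: "- (real T * Bd M) \<le> u0 M T p \<sigma> l"
  proof (rule u0_greatest)
    fix \<tau>l :: "'a list \<Rightarrow> 'b list \<Rightarrow> 'b \<Rightarrow> real" assume t: "\<forall>hA hB. is_dist (\<tau>l hA hB)"
    show "- (real T * Bd M) \<le> (\<Sum>k\<in>UNIV. p k * cpay M \<sigma> (\<lambda>_. \<tau>l) k l T [] [])"
      using S1_bound[OF p s t, of M l T] by linarith
  qed
  obtain f :: "'b \<Rightarrow> real" where f: "is_dist f" using dist_ex by blast
  have "u0 M T p \<sigma> l \<le> (\<Sum>k\<in>UNIV. p k * cpay M \<sigma> (\<lambda>_. \<lambda>_ _. f) k l T [] [])"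
    by (rule u0_lower[OF p s]) (simp add: f)
  also have "\<dots> \<le> real T * Bd M" using S1_bound[OF p s, of "\<lambda>_ _. f" M l T] f by simp
  finally show ?thesis using lo by linarith
qed

lemma part1:
  fixes M :: "'k::finite \<Rightarrow> 'l::finite \<Rightarrow> 'a::finite \<Rightarrow> 'b::finite \<Rightarrow> real"
  assumes p: "is_dist p" and q: "is_dist q"
    and sec: "security1 M T p q \<sigma>s"
    and ds: "dual_security1 M T p (\<lambda>l. - u0 M T p \<sigma>s l) \<sigma>d"
  shows "security1 M T p q \<sigma>d"
proof -
  define \<nu> where "\<nu> = (\<lambda>l. - u0 M T p \<sigma>s l)"
  have vs: "valid1 \<sigma>s" using sec by (simp add: security1_def)
  have vd: "valid1 \<sigma>d" using ds by (simp add: dual_security1_def)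
  define F where "F = (\<lambda>\<sigma>. INF \<tau>\<in>{\<tau>. valid2 \<tau>}. payoff M T p q \<sigma> \<tau>)"
  have Fs: "F \<sigma>s = (SUP \<sigma>'\<in>{\<sigma>'. valid1 \<sigma>'}. F \<sigma>')" using sec by (simp add: security1_def F_def)
  have Feq: "F \<sigma> = (\<Sum>l\<in>UNIV. q l * u0 M T p \<sigma> l)" if "valid1 \<sigma>" for \<sigma>
    unfolding F_def by (rule F_eq[OF p q that])
  have Fbd: "bdd_above (F ` {\<sigma>'. valid1 \<sigma>'})"
  proof (rule bdd_aboveI[where M="real T * Bd M"])
    fix x assume "x \<in> F ` {\<sigma>'. valid1 \<sigma>'}"
    then obtain \<sigma> where v: "valid1 \<sigma>" and x: "x = F \<sigma>" by blast
    have "\<bar>\<Sum>l\<in>UNIV. q l * u0 M T p \<sigma> l\<bar> \<le> real T * Bd M"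
      by (rule dist_avg_abs[OF q]) (rule u0_abs[OF p v])
    then show "x \<le> real T * Bd M" using x Feq[OF v] by linarith
  qed
  define DZ where "DZ = {\<pi>::'l \<Rightarrow> real. is_dist \<pi>} \<times> {\<tau>::'l \<Rightarrow> 'a list \<Rightarrow> 'b list \<Rightarrow> 'b \<Rightarrow> real. valid2 \<tau>}"
  have DZne: "DZ \<noteq> {}" unfolding DZ_def using D_ne V2_ne by blast
  define G where "G = (\<lambda>\<sigma>. INF z\<in>DZ. dpay2 M T p \<nu> \<sigma> (fst z) (snd z))"
  have Gd: "G \<sigma>d = (SUP \<sigma>'\<in>{\<sigma>'. valid1 \<sigma>'}. G \<sigma>')"
    using ds by (simp add: dual_security1_def G_def DZ_def \<nu>_def)
  have dbound: "\<bar>dpay2 M T p \<nu> \<sigma> (fst z) (snd z)\<bar> \<le> 2 * (real T * Bd M)" if v: "valid1 \<sigma>" and z: "z \<in> DZ" for \<sigma> z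
  proof -
    have zd: "is_dist (fst z)" and zv: "valid2 (snd z)" using z by (auto simp: DZ_def)
    show ?thesis unfolding dpay2_decomp[OF p]
    proof (rule dist_avg_abs[OF zd])
      fix l
      have "\<bar>\<Sum>k\<in>UNIV. p k * cpay M \<sigma> (\<lambda>_. snd z l) k l T [] []\<bar> \<le> real T * Bd M"
        by (rule S1_bound[OF p v]) (use zv in \<open>simp add: valid2_def\<close>)
      moreover have "\<bar>\<nu> l\<bar> \<le> real T * Bd M" unfolding \<nu>_def using u0_abs[OF p vs] by simp
      ultimately show "\<bar>\<nu> l + (\<Sum>k\<in>UNIV. p k * cpay M \<sigma> (\<lambda>_. snd z l) k l T [] [])\<bar> \<le> 2 * (real T * Bd M)"
        by linarith
    qed
  qed
  have Gbb: "bdd_below ((\<lambda>z. dpay2 M T p \<nu> \<sigma> (fst z) (snd z)) ` DZ)" if v: "valid1 \<sigma>" for \<sigma>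
  proof (rule bdd_belowI[where m="- (2 * (real T * Bd M))"])
    fix x assume "x \<in> (\<lambda>z. dpay2 M T p \<nu> \<sigma> (fst z) (snd z)) ` DZ"
    then obtain z where z: "z \<in> DZ" and x: "x = dpay2 M T p \<nu> \<sigma> (fst z) (snd z)" by blast
    show "- (2 * (real T * Bd M)) \<le> x" using dbound[OF v z] x by linarith
  qed
  have Gbd: "bdd_above (G ` {\<sigma>'. valid1 \<sigma>'})"
  proof (rule bdd_aboveI[where M="2 * (real T * Bd M)"])
    fix x assume "x \<in> G ` {\<sigma>'. valid1 \<sigma>'}"
    then obtain \<sigma> where v: "valid1 \<sigma>" and x: "x = G \<sigma>" by blast
    obtain z where z: "z \<in> DZ" using DZne by blast
    have "G \<sigma> \<le> dpay2 M T p \<nu> \<sigma> (fst z) (snd z)" unfolding G_def by (rule cINF_lower[OF Gbb[OF v] z])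
    then show "x \<le> 2 * (real T * Bd M)" using dbound[OF v z] x by linarith
  qed
  have G0: "0 \<le> G \<sigma>s" unfolding G_def
  proof (rule cINF_greatest[OF DZne])
    fix z assume z: "z \<in> DZ"
    have zd: "is_dist (fst z)" and zv: "valid2 (snd z)" using z by (auto simp: DZ_def)
    show "0 \<le> dpay2 M T p \<nu> \<sigma>s (fst z) (snd z)" unfolding dpay2_decomp[OF p]
    proof (rule sum_nonneg, rule mult_nonneg_nonneg)
      fix l
      show "0 \<le> fst z l" using zd by (rule dist_nonneg)
      have "u0 M T p \<sigma>s l \<le> (\<Sum>k\<in>UNIV. p k * cpay M \<sigma>s (\<lambda>_. snd z l) k l T [] [])"
        by (rule u0_lower[OF p vs]) (use zv in \<open>simp add: valid2_def\<close>)
      then show "0 \<le> \<nu> l + (\<Sum>k\<in>UNIV. p k * cpay M \<sigma>s (\<lambda>_. snd z l) k l T [] [])"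
        unfolding \<nu>_def by simp
    qed
  qed
  have "G \<sigma>s \<le> G \<sigma>d" unfolding Gd by (rule cSUP_upper[OF _ Gbd]) (use vs in simp)
  with G0 have Gd0: "0 \<le> G \<sigma>d" by linarith
  have Umono: "u0 M T p \<sigma>s l \<le> u0 M T p \<sigma>d l" for l
  proof (rule u0_greatest)
    fix \<tau>l :: "'a list \<Rightarrow> 'b list \<Rightarrow> 'b \<Rightarrow> real" assume t: "\<forall>hA hB. is_dist (\<tau>l hA hB)"
    define z where "z = ((\<lambda>x. if x = l then 1 else (0::real)), (\<lambda>_::'l. \<tau>l))"
    have dd: "is_dist (\<lambda>x::'l. if x = l then 1 else (0::real))" by (rule delta_dist)
    have z: "z \<in> DZ" unfolding z_def DZ_def using dd valid2_const[OF t] by simp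
    have "G \<sigma>d \<le> dpay2 M T p \<nu> \<sigma>d (fst z) (snd z)" unfolding G_def by (rule cINF_lower[OF Gbb[OF vd] z])
    also have "\<dots> = \<nu> l + (\<Sum>k\<in>UNIV. p k * cpay M \<sigma>d (\<lambda>_. \<tau>l) k l T [] [])"
    proof -
      have "\<And>la. (if la = l then 1 else 0) * (\<nu> la + (\<Sum>k\<in>UNIV. p k * cpay M \<sigma>d (\<lambda>_. \<tau>l) k la T [] []))
          = (if la = l then \<nu> la + (\<Sum>k\<in>UNIV. p k * cpay M \<sigma>d (\<lambda>_. \<tau>l) k la T [] []) else 0)" by simp
      then show ?thesis unfolding dpay2_decomp[OF p] z_def by simp
    qed
    finally show "u0 M T p \<sigma>s l \<le> (\<Sum>k\<in>UNIV. p k * cpay M \<sigma>d (\<lambda>_. \<tau>l) k l T [] [])"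
      using Gd0 unfolding \<nu>_def by linarith
  qed
  have "F \<sigma>s \<le> F \<sigma>d" unfolding Feq[OF vs] Feq[OF vd] by (rule sum_le_w[OF q Umono])
  moreover have "F \<sigma>d \<le> F \<sigma>s" unfolding Fs by (rule cSUP_upper[OF _ Fbd]) (use vd in simp)
  ultimately have "F \<sigma>d = (SUP \<sigma>'\<in>{\<sigma>'. valid1 \<sigma>'}. F \<sigma>')" using Fs by linarith
  then show ?thesis using vd by (simp add: security1_def F_def)
qed

lemma S2_bound:
  fixes M :: "'k::finite \<Rightarrow> 'l::finite \<Rightarrow> 'a::finite \<Rightarrow> 'b::finite \<Rightarrow> real"
  assumes "is_dist q" "valid2 \<tau>" "\<forall>hA hB. is_dist (\<sigma>k hA hB)"
  shows "\<bar>\<Sum>l\<in>UNIV. q l * cpay M (\<lambda>_. \<sigma>k) \<tau> k l T [] []\<bar> \<le> real T * Bd M"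
  by (rule dist_avg_abs[OF assms(1)]) (rule cpay_bound[OF valid1_const[OF assms(3)] assms(2)])

lemma S2_ba:
  fixes M :: "'k::finite \<Rightarrow> 'l::finite \<Rightarrow> 'a::finite \<Rightarrow> 'b::finite \<Rightarrow> real"
  assumes "is_dist q" "valid2 \<tau>"
  shows "bdd_above ((\<lambda>\<sigma>k. \<Sum>l\<in>UNIV. q l * cpay M (\<lambda>_. \<sigma>k) \<tau> k l T [] []) ` {\<sigma>k. \<forall>hA hB. is_dist (\<sigma>k hA hB)})"
proof (rule bdd_aboveI[where M="real T * Bd M"])
  fix x assume "x \<in> (\<lambda>\<sigma>k. \<Sum>l\<in>UNIV. q l * cpay M (\<lambda>_. \<sigma>k) \<tau> k l T [] []) ` {\<sigma>k. \<forall>hA hB. is_dist (\<sigma>k hA hB)}"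
  then obtain \<sigma>k where t: "\<forall>hA hB. is_dist (\<sigma>k hA hB)" and x: "x = (\<Sum>l\<in>UNIV. q l * cpay M (\<lambda>_. \<sigma>k) \<tau> k l T [] [])" by blast
  show "x \<le> real T * Bd M" using S2_bound[OF assms t, of M k T] x by linarith
qed

lemma w0_upper:
  fixes M :: "'k::finite \<Rightarrow> 'l::finite \<Rightarrow> 'a::finite \<Rightarrow> 'b::finite \<Rightarrow> real"
  assumes "is_dist q" "valid2 \<tau>" "\<forall>hA hB. is_dist (\<sigma>k hA hB)"
  shows "(\<Sum>l\<in>UNIV. q l * cpay M (\<lambda>_. \<sigma>k) \<tau> k l T [] []) \<le> w0 M T q \<tau> k"
  unfolding w0_def
  by (rule cSUP_upper[OF _ S2_ba[OF assms(1,2)]]) (use assms in auto)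

lemma w0_least:
  assumes "\<And>\<sigma>k. \<forall>hA hB. is_dist (\<sigma>k hA hB) \<Longrightarrow> (\<Sum>l\<in>UNIV. q l * cpay M (\<lambda>_. \<sigma>k) \<tau> k l T [] []) \<le> c"
  shows "w0 M T q \<tau> k \<le> c"
  unfolding w0_def by (rule cSUP_least) (use assms TL_ne in auto)

lemma w0_greater:
  fixes M :: "'k::finite \<Rightarrow> 'l::finite \<Rightarrow> 'a::finite \<Rightarrow> 'b::finite \<Rightarrow> real"
  assumes "is_dist q" "valid2 \<tau>" "0 < e"
  shows "\<exists>\<sigma>k. (\<forall>hA hB. is_dist (\<sigma>k hA hB)) \<and> w0 M T q \<tau> k < (\<Sum>l\<in>UNIV. q l * cpay M (\<lambda>_. \<sigma>k) \<tau> k l T [] []) + e"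
proof -
  have w: "w0 M T q \<tau> k - e < w0 M T q \<tau> k" using assms by simp
  have "\<exists>\<sigma>k\<in>{\<sigma>k. \<forall>hA hB. is_dist (\<sigma>k hA hB)}. w0 M T q \<tau> k - e < (\<Sum>l\<in>UNIV. q l * cpay M (\<lambda>_. \<sigma>k) \<tau> k l T [] [])"
    using w unfolding w0_def[of M T q \<tau> k] by (subst (asm) less_cSUP_iff[OF TL_ne S2_ba[OF assms(1,2)]])
  then obtain \<sigma>k where s1: "\<forall>hA hB. is_dist (\<sigma>k hA hB)" and s2: "w0 M T q \<tau> k - e < (\<Sum>l\<in>UNIV. q l * cpay M (\<lambda>_. \<sigma>k) \<tau> k l T [] [])"
    by blast
  have "w0 M T q \<tau> k < (\<Sum>l\<in>UNIV. q l * cpay M (\<lambda>_. \<sigma>k) \<tau> k l T [] []) + e" using s2 by linarith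
  with s1 show ?thesis by blast
qed

lemma payoff_decomp2:
  "payoff M T p q \<sigma> \<tau> = (\<Sum>k\<in>UNIV. p k * (\<Sum>l\<in>UNIV. q l * cpay M (\<lambda>_. \<sigma> k) \<tau> k l T [] []))"
  unfolding payoff_def
  by (simp add: sum_distrib_left cpay_loc1[of M \<sigma> \<tau>] mult.assoc)

lemma H_eq:
  fixes M :: "'k::finite \<Rightarrow> 'l::finite \<Rightarrow> 'a::finite \<Rightarrow> 'b::finite \<Rightarrow> real"
  assumes p: "is_dist p" and q: "is_dist q" and t: "valid2 \<tau>"
  shows "(SUP \<sigma>\<in>{\<sigma>. valid1 \<sigma>}. payoff M T p q \<sigma> \<tau>) = (\<Sum>k\<in>UNIV. p k * w0 M T q \<tau> k)"
proof (rule antisym)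
  show "(SUP \<sigma>\<in>{\<sigma>. valid1 \<sigma>}. payoff M T p q \<sigma> \<tau>) \<le> (\<Sum>k\<in>UNIV. p k * w0 M T q \<tau> k)"
  proof (rule cSUP_least)
    show "{\<sigma>. valid1 \<sigma>} \<noteq> {}" by (rule V1_ne)
    fix \<sigma> :: "'k \<Rightarrow> 'a list \<Rightarrow> 'b list \<Rightarrow> 'a \<Rightarrow> real" assume "\<sigma> \<in> {\<sigma>. valid1 \<sigma>}"
    then have v: "valid1 \<sigma>" by simp
    show "payoff M T p q \<sigma> \<tau> \<le> (\<Sum>k\<in>UNIV. p k * w0 M T q \<tau> k)"
      unfolding payoff_decomp2
      by (rule sum_le_w[OF p], rule w0_upper[OF q t]) (use v in \<open>simp add: valid1_def\<close>)
  qed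
next
  have ba: "bdd_above ((\<lambda>\<sigma>. payoff M T p q \<sigma> \<tau>) ` {\<sigma>. valid1 \<sigma>})"
  proof (rule bdd_aboveI[where M="real T * Bd M"])
    fix x assume "x \<in> (\<lambda>\<sigma>. payoff M T p q \<sigma> \<tau>) ` {\<sigma>. valid1 \<sigma>}"
    then obtain \<sigma> where v: "valid1 \<sigma>" and x: "x = payoff M T p q \<sigma> \<tau>" by blast
    show "x \<le> real T * Bd M" using payoff_bound[OF p q v t, of M T] x by linarith
  qed
  show "(\<Sum>k\<in>UNIV. p k * w0 M T q \<tau> k) \<le> (SUP \<sigma>\<in>{\<sigma>. valid1 \<sigma>}. payoff M T p q \<sigma> \<tau>)"
  proof (rule field_le_epsilon)
    fix e :: real assume e: "0 < e"
    have "\<forall>k. \<exists>\<sigma>k. (\<forall>hA hB. is_dist (\<sigma>k hA hB)) \<and> w0 M T q \<tau> k < (\<Sum>l\<in>UNIV. q l * cpay M (\<lambda>_. \<sigma>k) \<tau> k l T [] []) + e"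
      using w0_greater[OF q t e] by blast
    then have "\<exists>sc. \<forall>k. (\<forall>hA hB. is_dist (sc k hA hB)) \<and> w0 M T q \<tau> k < (\<Sum>l\<in>UNIV. q l * cpay M (\<lambda>_. sc k) \<tau> k l T [] []) + e"
      by (rule choice)
    then obtain sc where sc: "\<And>k. (\<forall>hA hB. is_dist (sc k hA hB)) \<and> w0 M T q \<tau> k < (\<Sum>l\<in>UNIV. q l * cpay M (\<lambda>_. sc k) \<tau> k l T [] []) + e"
      by blast
    have v: "valid1 sc" using sc by (simp add: valid1_def)
    have "(\<Sum>k\<in>UNIV. p k * w0 M T q \<tau> k) \<le> payoff M T p q sc \<tau> + e"
      unfolding payoff_decomp2 by (rule sum_le_e[OF p]) (use sc in \<open>auto intro: less_imp_le\<close>)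
    also have "payoff M T p q sc \<tau> \<le> (SUP \<sigma>\<in>{\<sigma>. valid1 \<sigma>}. payoff M T p q \<sigma> \<tau>)"
      by (rule cSUP_upper[OF _ ba]) (use v in simp)
    finally show "(\<Sum>k\<in>UNIV. p k * w0 M T q \<tau> k) \<le> (SUP \<sigma>\<in>{\<sigma>. valid1 \<sigma>}. payoff M T p q \<sigma> \<tau>) + e" by simp
  qed
qed

lemma dpay1_decomp:
  assumes "is_dist q"
  shows "dpay1 M T \<mu> q \<rho> \<sigma> \<tau> = (\<Sum>k\<in>UNIV. \<rho> k * (\<mu> k + (\<Sum>l\<in>UNIV. q l * cpay M (\<lambda>_. \<sigma> k) \<tau> k l T [] [])))"
proof -
  have "dpay1 M T \<mu> q \<rho> \<sigma> \<tau> = (\<Sum>k\<in>UNIV. \<rho> k * (\<mu> k * (\<Sum>l\<in>UNIV. q l) + (\<Sum>l\<in>UNIV. q l * cpay M (\<lambda>_. \<sigma> k) \<tau> k l T [] [])))"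
    unfolding dpay1_def
    by (simp add: sum_distrib_left sum_distrib_right sum.distrib algebra_simps cpay_loc1[of M \<sigma> \<tau>])
  then show ?thesis using dist_sum1[OF assms] by simp
qed

lemma w0_abs:
  fixes M :: "'k::finite \<Rightarrow> 'l::finite \<Rightarrow> 'a::finite \<Rightarrow> 'b::finite \<Rightarrow> real"
  assumes q: "is_dist q" and t: "valid2 \<tau>"
  shows "\<bar>w0 M T q \<tau> k\<bar> \<le> real T * Bd M"
proof -
  have hi: "w0 M T q \<tau> k \<le> real T * Bd M"
  proof (rule w0_least)
    fix \<sigma>k :: "'a list \<Rightarrow> 'b list \<Rightarrow> 'a \<Rightarrow> real" assume s: "\<forall>hA hB. is_dist (\<sigma>k hA hB)"
    show "(\<Sum>l\<in>UNIV. q l * cpay M (\<lambda>_. \<sigma>k) \<tau> k l T [] []) \<le> real T * Bd M"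
      using S2_bound[OF q t s, of M k T] by linarith
  qed
  obtain f :: "'a \<Rightarrow> real" where f: "is_dist f" using dist_ex by blast
  have "- (real T * Bd M) \<le> (\<Sum>l\<in>UNIV. q l * cpay M (\<lambda>_. \<lambda>_ _. f) \<tau> k l T [] [])"
    using S2_bound[OF q t, of "\<lambda>_ _. f" M k T] f by simp
  also have "\<dots> \<le> w0 M T q \<tau> k"
    by (rule w0_upper[OF q t]) (simp add: f)
  finally show ?thesis using hi by linarith
qed

lemma part2:
  fixes M :: "'k::finite \<Rightarrow> 'l::finite \<Rightarrow> 'a::finite \<Rightarrow> 'b::finite \<Rightarrow> real"
  assumes p: "is_dist p" and q: "is_dist q"
    and sec: "security2 M T p q \<tau>s"
    and ds: "dual_security2 M T (\<lambda>k. - w0 M T q \<tau>s k) q \<tau>d"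
  shows "security2 M T p q \<tau>d"
proof -
  define \<mu> where "\<mu> = (\<lambda>k. - w0 M T q \<tau>s k)"
  have vs: "valid2 \<tau>s" using sec by (simp add: security2_def)
  have vd: "valid2 \<tau>d" using ds by (simp add: dual_security2_def)
  define H where "H = (\<lambda>\<tau>. SUP \<sigma>\<in>{\<sigma>. valid1 \<sigma>}. payoff M T p q \<sigma> \<tau>)"
  have Hs: "H \<tau>s = (INF \<tau>'\<in>{\<tau>'. valid2 \<tau>'}. H \<tau>')" using sec by (simp add: security2_def H_def)
  have Heq: "H \<tau> = (\<Sum>k\<in>UNIV. p k * w0 M T q \<tau> k)" if "valid2 \<tau>" for \<tau>
    unfolding H_def by (rule H_eq[OF p q that])
  have Hbd: "bdd_below (H ` {\<tau>'. valid2 \<tau>'})"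
  proof (rule bdd_belowI[where m="- (real T * Bd M)"])
    fix x assume "x \<in> H ` {\<tau>'. valid2 \<tau>'}"
    then obtain \<tau> where v: "valid2 \<tau>" and x: "x = H \<tau>" by blast
    have "\<bar>\<Sum>k\<in>UNIV. p k * w0 M T q \<tau> k\<bar> \<le> real T * Bd M"
      by (rule dist_avg_abs[OF p]) (rule w0_abs[OF q v])
    then show "- (real T * Bd M) \<le> x" using x Heq[OF v] by linarith
  qed
  define DZ where "DZ = {\<rho>::'k \<Rightarrow> real. is_dist \<rho>} \<times> {\<sigma>::'k \<Rightarrow> 'a list \<Rightarrow> 'b list \<Rightarrow> 'a \<Rightarrow> real. valid1 \<sigma>}"
  have DZne: "DZ \<noteq> {}" unfolding DZ_def using D_ne V1_ne by blast
  define G where "G = (\<lambda>\<tau>. SUP z\<in>DZ. dpay1 M T \<mu> q (fst z) (snd z) \<tau>)"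
  have Gd: "G \<tau>d = (INF \<tau>'\<in>{\<tau>'. valid2 \<tau>'}. G \<tau>')"
    using ds by (simp add: dual_security2_def G_def DZ_def \<mu>_def)
  have dbound: "\<bar>dpay1 M T \<mu> q (fst z) (snd z) \<tau>\<bar> \<le> 2 * (real T * Bd M)" if v: "valid2 \<tau>" and z: "z \<in> DZ" for \<tau> z
  proof -
    have zd: "is_dist (fst z)" and zv: "valid1 (snd z)" using z by (auto simp: DZ_def)
    show ?thesis unfolding dpay1_decomp[OF q]
    proof (rule dist_avg_abs[OF zd])
      fix k
      have "\<bar>\<Sum>l\<in>UNIV. q l * cpay M (\<lambda>_. snd z k) \<tau> k l T [] []\<bar> \<le> real T * Bd M"
        by (rule S2_bound[OF q v]) (use zv in \<open>simp add: valid1_def\<close>)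
      moreover have "\<bar>\<mu> k\<bar> \<le> real T * Bd M" unfolding \<mu>_def using w0_abs[OF q vs] by simp
      ultimately show "\<bar>\<mu> k + (\<Sum>l\<in>UNIV. q l * cpay M (\<lambda>_. snd z k) \<tau> k l T [] [])\<bar> \<le> 2 * (real T * Bd M)"
        by linarith
    qed
  qed
  have Gba: "bdd_above ((\<lambda>z. dpay1 M T \<mu> q (fst z) (snd z) \<tau>) ` DZ)" if v: "valid2 \<tau>" for \<tau>
  proof (rule bdd_aboveI[where M="2 * (real T * Bd M)"])
    fix x assume "x \<in> (\<lambda>z. dpay1 M T \<mu> q (fst z) (snd z) \<tau>) ` DZ"
    then obtain z where z: "z \<in> DZ" and x: "x = dpay1 M T \<mu> q (fst z) (snd z) \<tau>" by blast
    show "x \<le> 2 * (real T * Bd M)" using dbound[OF v z] x by linarith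
  qed
  have Gbd: "bdd_below (G ` {\<tau>'. valid2 \<tau>'})"
  proof (rule bdd_belowI[where m="- (2 * (real T * Bd M))"])
    fix x assume "x \<in> G ` {\<tau>'. valid2 \<tau>'}"
    then obtain \<tau> where v: "valid2 \<tau>" and x: "x = G \<tau>" by blast
    obtain z where z: "z \<in> DZ" using DZne by blast
    have "dpay1 M T \<mu> q (fst z) (snd z) \<tau> \<le> G \<tau>" unfolding G_def by (rule cSUP_upper[OF z Gba[OF v]])
    then show "- (2 * (real T * Bd M)) \<le> x" using dbound[OF v z] x by linarith
  qed
  have G0: "G \<tau>s \<le> 0" unfolding G_def
  proof (rule cSUP_least[OF DZne])
    fix z assume z: "z \<in> DZ"
    have zd: "is_dist (fst z)" and zv: "valid1 (snd z)" using z by (auto simp: DZ_def)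
    show "dpay1 M T \<mu> q (fst z) (snd z) \<tau>s \<le> 0" unfolding dpay1_decomp[OF q]
    proof (rule sum_nonpos, rule mult_nonneg_nonpos)
      fix k
      show "0 \<le> fst z k" using zd by (rule dist_nonneg)
      have "(\<Sum>l\<in>UNIV. q l * cpay M (\<lambda>_. snd z k) \<tau>s k l T [] []) \<le> w0 M T q \<tau>s k"
        by (rule w0_upper[OF q vs]) (use zv in \<open>simp add: valid1_def\<close>)
      then show "\<mu> k + (\<Sum>l\<in>UNIV. q l * cpay M (\<lambda>_. snd z k) \<tau>s k l T [] []) \<le> 0"
        unfolding \<mu>_def by simp
    qed
  qed
  have "G \<tau>d \<le> G \<tau>s" unfolding Gd by (rule cINF_lower[OF Gbd]) (use vs in simp)
  with G0 have Gd0: "G \<tau>d \<le> 0" by linarith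
  have Wmono: "w0 M T q \<tau>d k \<le> w0 M T q \<tau>s k" for k
  proof (rule w0_least)
    fix \<sigma>k :: "'a list \<Rightarrow> 'b list \<Rightarrow> 'a \<Rightarrow> real" assume t: "\<forall>hA hB. is_dist (\<sigma>k hA hB)"
    define z where "z = ((\<lambda>x. if x = k then 1 else (0::real)), (\<lambda>_::'k. \<sigma>k))"
    have dd: "is_dist (\<lambda>x::'k. if x = k then 1 else (0::real))" by (rule delta_dist)
    have z: "z \<in> DZ" unfolding z_def DZ_def using dd valid1_const[OF t] by simp
    have "\<mu> k + (\<Sum>l\<in>UNIV. q l * cpay M (\<lambda>_. \<sigma>k) \<tau>d k l T [] []) = dpay1 M T \<mu> q (fst z) (snd z) \<tau>d"
    proof -
      have "\<And>ka. (if ka = k then 1 else 0) * (\<mu> ka + (\<Sum>l\<in>UNIV. q l * cpay M (\<lambda>_. \<sigma>k) \<tau>d ka l T [] []))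
          = (if ka = k then \<mu> ka + (\<Sum>l\<in>UNIV. q l * cpay M (\<lambda>_. \<sigma>k) \<tau>d ka l T [] []) else 0)" by simp
      then show ?thesis unfolding dpay1_decomp[OF q] z_def by simp
    qed
    also have "\<dots> \<le> G \<tau>d" unfolding G_def by (rule cSUP_upper[OF z Gba[OF vd]])
    finally show "(\<Sum>l\<in>UNIV. q l * cpay M (\<lambda>_. \<sigma>k) \<tau>d k l T [] []) \<le> w0 M T q \<tau>s k"
      using Gd0 unfolding \<mu>_def by linarith
  qed
  have "H \<tau>d \<le> H \<tau>s" unfolding Heq[OF vs] Heq[OF vd] by (rule sum_le_w[OF p Wmono])
  moreover have "H \<tau>s \<le> H \<tau>d" unfolding Hs by (rule cINF_lower[OF Hbd]) (use vd in simp)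
  ultimately have "H \<tau>d = (INF \<tau>'\<in>{\<tau>'. valid2 \<tau>'}. H \<tau>')" using Hs by linarith
  then show ?thesis using vd by (simp add: security2_def H_def)
qed

theorem corollary1:
  fixes M :: "'k::finite \<Rightarrow> 'l::finite \<Rightarrow> 'a::finite \<Rightarrow> 'b::finite \<Rightarrow> real"
    and T :: nat and p :: "'k \<Rightarrow> real" and q :: "'l \<Rightarrow> real"
  assumes "is_dist p" and "\<forall>k. 0 < p k"
    and "is_dist q" and "\<forall>l. 0 < q l"
  shows "(\<forall>\<sigma>s \<sigma>d. security1 M T p q \<sigma>s \<and>
            dual_security1 M T p (\<lambda>l. - u0 M T p \<sigma>s l) \<sigma>d \<and>
            markov1 M T p (\<lambda>l. - u0 M T p \<sigma>s l) \<sigma>d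
            \<longrightarrow> security1 M T p q \<sigma>d)
       \<and> (\<forall>\<tau>s \<tau>d. security2 M T p q \<tau>s \<and>
            dual_security2 M T (\<lambda>k. - w0 M T q \<tau>s k) q \<tau>d \<and>
            markov2 M T (\<lambda>k. - w0 M T q \<tau>s k) q \<tau>d
            \<longrightarrow> security2 M T p q \<tau>d)"
  using part1[OF assms(1,3)] part2[OF assms(1,3)] by blast

end
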